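(* Let $D$ be an integral domain and let $S\subseteq R(D)$ be a union of prime ideals of $R(D)$. Set $L(S):=\{0\neq x\in D\mid \frac1x\notin S\}\cup\{0\}$. Then $L(S)$ is both a subring of $D$ and a regular factroid of $D$.
   Context: For an integral domain $D$ with fraction field $F$, the reciprocal complement $R(D)$ is the subring of $F$ generated by all $1/d$, $d\in D\setminus\{0\}$. A factroid of $D$ is an additive subgroup $H$ of $D$ such that whenever $f,g\in D\setminus\{0\}$ with $fg\in H$, then $f,g\in H$. For $S\subseteq D$, $[S]_D$ is the smallest factroid of $D$ containing $S$. A factroid $H$ is regular if $\{y\in D\mid gy\in[gH]_D\}=H$ for every nonzero $g\in D$. *)

theory Defs
  imports "HOL-Computational_Algebra.Fraction_Field"
begin

text \<open>The integral domain D is the type 'a :: idom; its fraction field is 'a fract,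
  with D embedded via d maps to Fract d 1, so 1/d is Fract 1 d.\<close>

inductive_set subring_gen :: "'b::comm_ring_1 set \<Rightarrow> 'b set" for X where
  gen: "x \<in> X \<Longrightarrow> x \<in> subring_gen X"
| one: "1 \<in> subring_gen X"
| add: "x \<in> subring_gen X \<Longrightarrow> y \<in> subring_gen X \<Longrightarrow> x + y \<in> subring_gen X"
| neg: "x \<in> subring_gen X \<Longrightarrow> - x \<in> subring_gen X"
| mult: "x \<in> subring_gen X \<Longrightarrow> y \<in> subring_gen X \<Longrightarrow> x * y \<in> subring_gen X"

definition recip_compl :: "('a::idom) fract set" where
  "recip_compl = subring_gen {Fract 1 d | d. d \<noteq> 0}"

definition is_subring :: "'b::comm_ring_1 set \<Rightarrow> bool" where
  "is_subring A \<longleftrightarrow> 0 \<in> A \<and> 1 \<in> A \<and> (\<forall>x\<in>A. \<forall>y\<in>A. x + y \<in> A \<and> - x \<in> A \<and> x * y \<in> A)"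

definition is_prime_ideal_in :: "'b::comm_ring_1 set \<Rightarrow> 'b set \<Rightarrow> bool" where
  "is_prime_ideal_in R P \<longleftrightarrow> P \<subseteq> R \<and> 0 \<in> P \<and> (\<forall>x\<in>P. \<forall>y\<in>P. x + y \<in> P \<and> - x \<in> P)
     \<and> (\<forall>r\<in>R. \<forall>x\<in>P. r * x \<in> P) \<and> P \<noteq> R
     \<and> (\<forall>a\<in>R. \<forall>b\<in>R. a * b \<in> P \<longrightarrow> a \<in> P \<or> b \<in> P)"

definition is_add_subgroup :: "'b::ab_group_add set \<Rightarrow> bool" where
  "is_add_subgroup H \<longleftrightarrow> 0 \<in> H \<and> (\<forall>x\<in>H. \<forall>y\<in>H. x + y \<in> H \<and> - x \<in> H)"

text \<open>Factroid of the integral domain 'a (the whole type).\<close>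
definition factroid :: "'a::idom set \<Rightarrow> bool" where
  "factroid H \<longleftrightarrow> is_add_subgroup H \<and>
     (\<forall>f g. f \<noteq> 0 \<longrightarrow> g \<noteq> 0 \<longrightarrow> f * g \<in> H \<longrightarrow> f \<in> H \<and> g \<in> H)"

definition factroid_gen :: "'a::idom set \<Rightarrow> 'a set" where
  "factroid_gen S = \<Inter>{H. factroid H \<and> S \<subseteq> H}"

definition regular_factroid :: "'a::idom set \<Rightarrow> bool" where
  "regular_factroid H \<longleftrightarrow> factroid H \<and>
     (\<forall>g. g \<noteq> 0 \<longrightarrow> {y. g * y \<in> factroid_gen ((\<lambda>h. g * h) ` H)} = H)"

definition L_set :: "('a::idom) fract set \<Rightarrow> 'a set" where
  "L_set S = {x. x \<noteq> 0 \<and> Fract 1 x \<notin> S} \<union> {0}"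

end

theory Submission
  imports Defs
begin

lemma f3: "(x::'a::idom) \<noteq> 0 \<Longrightarrow> y \<noteq> 0 \<Longrightarrow> x + y \<noteq> 0 \<Longrightarrow> Fract 1 (x*y) = Fract 1 (x+y) * (Fract 1 x + Fract 1 y)"
proof -
  assume a: "x \<noteq> 0" "y \<noteq> 0" "x + y \<noteq> 0"
  have "Fract 1 x + Fract 1 y = Fract (x+y) (x*y)" using a by (simp add: algebra_simps)
  moreover have "Fract 1 (x+y) * Fract (x+y) (x*y) = Fract ((x+y)*1) ((x+y)*(x*y))"
    by (simp only: mult_fract mult_1_left mult_1_right)
  moreover have "\<dots> = Fract 1 (x*y)" by (intro mult_fract_cancel) (use a in simp)
  ultimately show ?thesis by simp
qed

lemma f1: "(x::'a::idom) \<noteq> 0 \<Longrightarrow> y \<noteq> 0 \<Longrightarrow> Fract 1 (x*y) = Fract 1 x * Fract 1 y" by simp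
lemma f6: "Fract ((x::'a::idom)+y) 1 = Fract x 1 + Fract y 1" by simp
lemma f4: "Fract ((g::'a::idom)*y) 1 = Fract g 1 * Fract y 1" by simp
lemma f7: "Fract (-(x::'a::idom)) 1 = - Fract x 1" by simp
lemma f8: "Fract (0::'a::idom) 1 = 0" by (simp add: Zero_fract_def)

lemma f2: "Fract 1 (-(x::'a::idom)) = - Fract 1 x"
  by (cases "x = 0") (simp_all add: eq_fract)

lemma f5: "(y::'a::idom) \<noteq> 0 \<Longrightarrow> Fract 1 y * Fract y 1 = 1" by (simp add: eq_fract One_fract_def)

lemma R_one: "(1::'a::idom fract) \<in> recip_compl"
  unfolding recip_compl_def by (rule subring_gen.one)
lemma R_inv: "(d::'a::idom) \<noteq> 0 \<Longrightarrow> Fract 1 d \<in> recip_compl"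
  unfolding recip_compl_def by (rule subring_gen.gen) auto
lemma R_add: "x \<in> recip_compl \<Longrightarrow> y \<in> recip_compl \<Longrightarrow> x + y \<in> (recip_compl :: 'a::idom fract set)"
  unfolding recip_compl_def by (rule subring_gen.add)
lemma R_neg: "x \<in> recip_compl \<Longrightarrow> - x \<in> (recip_compl :: 'a::idom fract set)"
  unfolding recip_compl_def by (rule subring_gen.neg)
lemma R_mult: "x \<in> recip_compl \<Longrightarrow> y \<in> recip_compl \<Longrightarrow> x * y \<in> (recip_compl :: 'a::idom fract set)"
  unfolding recip_compl_def by (rule subring_gen.mult)
lemma R_zero: "(0::'a::idom fract) \<in> recip_compl"
proof -
  have "(1::'a fract) + - 1 \<in> recip_compl" by (intro R_add R_neg R_one)
  then show ?thesis by simp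
qed

lemma P_sub: "is_prime_ideal_in R P \<Longrightarrow> x \<in> P \<Longrightarrow> x \<in> R"
  unfolding is_prime_ideal_in_def by blast
lemma P_zero: "is_prime_ideal_in R P \<Longrightarrow> 0 \<in> P"
  unfolding is_prime_ideal_in_def by blast
lemma P_add: "is_prime_ideal_in R P \<Longrightarrow> x \<in> P \<Longrightarrow> y \<in> P \<Longrightarrow> x + y \<in> P"
  unfolding is_prime_ideal_in_def by blast
lemma P_neg: "is_prime_ideal_in R P \<Longrightarrow> x \<in> P \<Longrightarrow> - x \<in> P"
  unfolding is_prime_ideal_in_def by blast
lemma P_mult: "is_prime_ideal_in R P \<Longrightarrow> r \<in> R \<Longrightarrow> x \<in> P \<Longrightarrow> r * x \<in> P"
  unfolding is_prime_ideal_in_def by blast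
lemma P_prime: "is_prime_ideal_in R P \<Longrightarrow> a \<in> R \<Longrightarrow> b \<in> R \<Longrightarrow> a * b \<in> P \<Longrightarrow> a \<in> P \<or> b \<in> P"
  unfolding is_prime_ideal_in_def by blast
lemma P_one: "is_prime_ideal_in R P \<Longrightarrow> 1 \<in> R \<Longrightarrow> 1 \<notin> P"
proof
  assume a: "is_prime_ideal_in R P" "1 \<in> R" "1 \<in> P"
  have "R \<subseteq> P" using P_mult[OF a(1) _ a(3)] by fastforce
  with a(1) show False unfolding is_prime_ideal_in_def by blast
qed

lemma L_mem: "S = \<Union>\<P> \<Longrightarrow> x \<in> L_set S \<longleftrightarrow> x = 0 \<or> (\<forall>P\<in>\<P>. Fract 1 x \<notin> P)"
  unfolding L_set_def by auto

theorem mainTheorem15: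
  fixes S :: "('a::idom) fract set"
  assumes "S \<subseteq> recip_compl"
    and "\<exists>\<P>. (\<forall>P\<in>\<P>. is_prime_ideal_in (recip_compl :: 'a fract set) P) \<and> S = \<Union>\<P>"
  shows "is_subring (L_set S) \<and> regular_factroid (L_set S)"
proof -
  obtain \<P> where PP: "\<And>P. P \<in> \<P> \<Longrightarrow> is_prime_ideal_in (recip_compl :: 'a fract set) P"
    and SU: "S = \<Union>\<P>" using assms(2) by blast
  let ?L = "L_set S"
  have Lm: "\<And>x. x \<in> ?L \<longleftrightarrow> x = 0 \<or> (\<forall>P\<in>\<P>. Fract 1 x \<notin> P)" using L_mem[OF SU] .
  have one: "1 \<in> ?L" using Lm P_one[OF PP R_one] by (simp add: One_fract_def)
  have zero: "0 \<in> ?L" using Lm by simp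
  have neg: "- x \<in> ?L" if "x \<in> ?L" for x
  proof -
    have "\<forall>P\<in>\<P>. Fract 1 (-x) \<notin> P" if "x \<noteq> 0"
    proof (intro ballI notI)
      fix P assume P: "P \<in> \<P>" "Fract 1 (-x) \<in> P"
      then have "- Fract 1 (-x) \<in> P" using P_neg[OF PP] by blast
      then have "Fract 1 x \<in> P" by (simp add: f2)
      then show False using \<open>x \<in> ?L\<close> Lm P that by blast
    qed
    then show ?thesis using Lm by auto
  qed
  have mult: "x * y \<in> ?L" if "x \<in> ?L" "y \<in> ?L" for x y
  proof (cases "x = 0 \<or> y = 0")
    case True then show ?thesis using zero by auto
  next
    case False
    show ?thesis unfolding Lm
    proof (intro disjI2 ballI notI)
      fix P assume P: "P \<in> \<P>" "Fract 1 (x*y) \<in> P"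
      then have "Fract 1 x * Fract 1 y \<in> P" using False by simp
      then have "Fract 1 x \<in> P \<or> Fract 1 y \<in> P" using P_prime[OF PP[OF P(1)]] R_inv False by blast
      then show False using that Lm P(1) False by blast
    qed
  qed
  have add: "x + y \<in> ?L" if "x \<in> ?L" "y \<in> ?L" for x y
  proof (cases "x = 0 \<or> y = 0 \<or> x + y = 0")
    case True then show ?thesis using zero that by auto
  next
    case False
    show ?thesis unfolding Lm
    proof (intro disjI2 ballI notI)
      fix P assume P: "P \<in> \<P>" "Fract 1 (x+y) \<in> P"
      have "Fract 1 (x+y) * (Fract 1 x + Fract 1 y) \<in> P"
        using P_mult[OF PP[OF P(1)] R_add[OF R_inv R_inv] P(2)] False by (simp add: mult.commute)
      then have "Fract 1 x * Fract 1 y \<in> P" using f3[of x y] False by simp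
      then have "Fract 1 x \<in> P \<or> Fract 1 y \<in> P" using P_prime[OF PP[OF P(1)]] R_inv False by blast
      then show False using that Lm P(1) False by blast
    qed
  qed
  have sub: "is_subring ?L" unfolding is_subring_def using zero one add neg mult by blast
  have fac2: "f \<in> ?L \<and> g \<in> ?L" if fg: "f \<noteq> 0" "g \<noteq> 0" "f * g \<in> ?L" for f g
  proof -
    have nf: "Fract 1 f * Fract 1 g \<notin> P" if P: "P \<in> \<P>" for P
    proof -
      have "f * g \<noteq> 0" using fg(1,2) by simp
      moreover have "f * g = 0 \<or> (\<forall>P\<in>\<P>. Fract 1 (f*g) \<notin> P)" using Lm[of "f*g"] fg(3) by (rule iffD1)
      ultimately have "Fract 1 (f*g) \<notin> P" using P by simp
      then show ?thesis by simp
    qed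
    have a: "Fract 1 f \<notin> P" if P: "P \<in> \<P>" for P
    proof
      assume "Fract 1 f \<in> P"
      then have "Fract 1 g * Fract 1 f \<in> P" by (rule P_mult[OF PP[OF P] R_inv[OF fg(2)]])
      then show False using nf[OF P] by (simp add: mult.commute)
    qed
    have b: "Fract 1 g \<notin> P" if P: "P \<in> \<P>" for P
    proof
      assume "Fract 1 g \<in> P"
      then have "Fract 1 f * Fract 1 g \<in> P" by (rule P_mult[OF PP[OF P] R_inv[OF fg(1)]])
      then show False using nf[OF P] by simp
    qed
    show ?thesis using a b by (simp add: Lm)
  qed
  have fac: "factroid ?L"
  proof -
    have "is_add_subgroup ?L" unfolding is_add_subgroup_def using zero add neg by blast
    moreover have "\<forall>f g. f \<noteq> 0 \<longrightarrow> g \<noteq> 0 \<longrightarrow> f * g \<in> ?L \<longrightarrow> f \<in> ?L \<and> g \<in> ?L"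
      using fac2 by blast
    ultimately show ?thesis unfolding factroid_def by blast
  qed
  have reg: "{y. g * y \<in> factroid_gen ((\<lambda>h. g * h) ` ?L)} = ?L" if g: "g \<noteq> 0" for g
  proof
    show "?L \<subseteq> {y. g * y \<in> factroid_gen ((\<lambda>h. g * h) ` ?L)}"
      unfolding factroid_gen_def by blast
  next
    define H where "H = {z. \<forall>P\<in>\<P>. \<exists>r\<in>recip_compl. \<exists>s\<in>recip_compl. s \<notin> P \<and> Fract z 1 * s = Fract g 1 * r}"
    have H0: "0 \<in> H" unfolding H_def mem_Collect_eq
    proof
      fix P assume P: "P \<in> \<P>"
      have "1 \<notin> P" using P_one[OF PP[OF P] R_one] .
      then show "\<exists>r\<in>recip_compl. \<exists>s\<in>recip_compl. s \<notin> P \<and> Fract 0 1 * s = Fract g 1 * r"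
        by (intro bexI[of _ 0] bexI[of _ 1] conjI R_zero R_one) (simp_all add: f8)
    qed
    have Hneg: "- z \<in> H" if "z \<in> H" for z
    proof -
      have "\<exists>r\<in>recip_compl. \<exists>s\<in>recip_compl. s \<notin> P \<and> Fract (-z) 1 * s = Fract g 1 * r" if P: "P \<in> \<P>" for P
      proof -
        obtain r s where 1: "r \<in> recip_compl" "s \<in> recip_compl" "s \<notin> P" "Fract z 1 * s = Fract g 1 * r"
          using \<open>z \<in> H\<close> P unfolding H_def by blast
        have "Fract (-z) 1 * s = - (Fract z 1 * s)" by (simp only: f7 minus_mult_left)
        also have "\<dots> = Fract g 1 * (- r)" using 1(4) by simp
        finally have "Fract (-z) 1 * s = Fract g 1 * (- r)" .
        then show ?thesis using 1(2,3) R_neg[OF 1(1)] by (intro bexI[of _ "-r"] bexI[of _ s] conjI)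
      qed
      then show ?thesis unfolding H_def by blast
    qed
    have Hadd: "z1 + z2 \<in> H" if hz: "z1 \<in> H" "z2 \<in> H" for z1 z2
      unfolding H_def mem_Collect_eq
    proof
      fix P assume P: "P \<in> \<P>"
      obtain r1 s1 where 1: "r1 \<in> recip_compl" "s1 \<in> recip_compl" "s1 \<notin> P" "Fract z1 1 * s1 = Fract g 1 * r1"
        using hz(1) P unfolding H_def by blast
      obtain r2 s2 where 2: "r2 \<in> recip_compl" "s2 \<in> recip_compl" "s2 \<notin> P" "Fract z2 1 * s2 = Fract g 1 * r2"
        using hz(2) P unfolding H_def by blast
      have "s1 * s2 \<notin> P" using P_prime[OF PP[OF P] 1(2) 2(2)] 1(3) 2(3) by blast
      moreover have "Fract (z1+z2) 1 * (s1 * s2) = Fract g 1 * (r1 * s2 + r2 * s1)"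
      proof -
        have "Fract (z1+z2) 1 * (s1 * s2) = (Fract z1 1 * s1) * s2 + (Fract z2 1 * s2) * s1"
          unfolding f6 by (simp only: ring_distribs mult.assoc mult.commute mult.left_commute)
        also have "\<dots> = (Fract g 1 * r1) * s2 + (Fract g 1 * r2) * s1" by (simp only: 1(4) 2(4))
        also have "\<dots> = Fract g 1 * (r1 * s2 + r2 * s1)" by (simp add: algebra_simps)
        finally show ?thesis .
      qed
      ultimately show "\<exists>r\<in>recip_compl. \<exists>s\<in>recip_compl. s \<notin> P \<and> Fract (z1 + z2) 1 * s = Fract g 1 * r"
        using 1 2 by (intro bexI[of _ "r1 * s2 + r2 * s1"] bexI[of _ "s1 * s2"]) (auto intro: R_add R_mult)
    qed
    have Hfac: "f \<in> H" if hf: "f * h \<in> H" "h \<noteq> 0" for f h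
      unfolding H_def mem_Collect_eq
    proof
      fix P assume P: "P \<in> \<P>"
      obtain r s where 1: "r \<in> recip_compl" "s \<in> recip_compl" "s \<notin> P" "Fract (f*h) 1 * s = Fract g 1 * r"
        using hf(1) P unfolding H_def by blast
      have "Fract f 1 * s = Fract g 1 * (r * Fract 1 h)"
      proof -
        have e: "Fract f 1 = Fract (f*h) 1 * Fract 1 h" using hf(2) by (simp add: eq_fract)
        have "Fract f 1 * s = (Fract (f*h) 1 * s) * Fract 1 h"
          by (subst e) (simp only: mult.assoc mult.commute mult.left_commute)
        also have "\<dots> = (Fract g 1 * r) * Fract 1 h" by (simp only: 1(4))
        finally show ?thesis by (simp only: mult.assoc)
      qed
      then show "\<exists>r\<in>recip_compl. \<exists>s\<in>recip_compl. s \<notin> P \<and> Fract f 1 * s = Fract g 1 * r"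
        using 1 R_mult R_inv[OF hf(2)] by blast
    qed
    have Hf: "factroid H"
    proof -
      have Hfac2: "g \<in> H" if "f * g \<in> H" "f \<noteq> 0" for f g
        using Hfac[of g f] that by (simp add: mult.commute)
      have "is_add_subgroup H" unfolding is_add_subgroup_def using H0 Hneg Hadd by blast
      moreover have "\<forall>f g. f \<noteq> 0 \<longrightarrow> g \<noteq> 0 \<longrightarrow> f * g \<in> H \<longrightarrow> f \<in> H \<and> g \<in> H"
        using Hfac Hfac2 by blast
      ultimately show ?thesis unfolding factroid_def by blast
    qed
    have Hsup: "(\<lambda>h. g * h) ` ?L \<subseteq> H"
    proof
      fix z assume "z \<in> (\<lambda>h. g * h) ` ?L"
      then obtain l where l: "l \<in> ?L" "z = g * l" by blast
      show "z \<in> H"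
      proof (cases "l = 0")
        case True then show ?thesis using H0 l by simp
      next
        case False
        show ?thesis unfolding H_def mem_Collect_eq
        proof
          fix P assume P: "P \<in> \<P>"
          have "Fract 1 l \<notin> P" using l(1) Lm False P by blast
          moreover have "Fract z 1 * Fract 1 l = Fract g 1 * 1"
            using l(2) False by (simp add: eq_fract)
          ultimately show "\<exists>r\<in>recip_compl. \<exists>s\<in>recip_compl. s \<notin> P \<and> Fract z 1 * s = Fract g 1 * r"
            using R_one R_inv[OF False] by blast
        qed
      qed
    qed
    have "factroid_gen ((\<lambda>h. g * h) ` ?L) \<subseteq> H"
      unfolding factroid_gen_def using Hf Hsup by blast
    show "{y. g * y \<in> factroid_gen ((\<lambda>h. g * h) ` ?L)} \<subseteq> ?L"
    proof
      fix y assume "y \<in> {y. g * y \<in> factroid_gen ((\<lambda>h. g * h) ` ?L)}"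
      then have gy: "g * y \<in> H" using \<open>factroid_gen _ \<subseteq> H\<close> by blast
      show "y \<in> ?L"
      proof (cases "y = 0")
        case True then show ?thesis using zero by simp
      next
        case y0: False
        have "\<forall>P\<in>\<P>. Fract 1 y \<notin> P"
        proof (intro ballI notI)
        fix P assume P: "P \<in> \<P>" "Fract 1 y \<in> P"
        obtain r s where 1: "r \<in> recip_compl" "s \<in> recip_compl" "s \<notin> P" "Fract (g*y) 1 * s = Fract g 1 * r"
          using gy P unfolding H_def by blast
        have gne: "Fract g 1 \<noteq> 0" using g by (simp add: Zero_fract_def eq_fract)
        have "Fract g 1 * (Fract y 1 * s) = Fract (g*y) 1 * s" by (simp only: f4 mult.assoc)
        also have "\<dots> = Fract g 1 * r" by (rule 1(4))
        finally have "Fract g 1 * (Fract y 1 * s) = Fract g 1 * r" .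
        then have ys: "Fract y 1 * s = r" using gne by simp
        have "s = (Fract 1 y * Fract y 1) * s" using f5[OF y0] by simp
        also have "\<dots> = Fract 1 y * r" using ys by (simp only: mult.assoc)
        finally have "s = Fract 1 y * r" .
        then have "s \<in> P" using P_mult[OF PP[OF P(1)] 1(1) P(2)] by (simp add: mult.commute)
        then show False using 1(3) by blast
        qed
        then show ?thesis using Lm[of y] by blast
      qed
    qed
  qed
  show ?thesis using sub fac reg unfolding regular_factroid_def by blast
qed

end
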